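(* Consider the $T$-round online first-price auction problem described in the context. For any $V_T\in\left[\frac{36}{T},\frac{T}{4}\right]$, \[ \inf_{\pi\in\Pi}\ \sup_{(v_t,m_t)_{t=1}^T\in\mathcal{V}}\mathbb{E}[\mathrm{DR}_T(\pi)]\ge\frac{\sqrt{TV_T}}{16}. \]
   Context: Online first-price auction over $T$ rounds: at each round $t$ the learner observes a private value $v_t\in[0,1]$, submits a bid $b_t\in[0,1]$, then observes $m_t\in[0,1]$, the highest bid of the other bidders, and receives reward $r(b_t;v_t,m_t)$ with $r(b;v,m)\coloneqq(v-b)\mathbbm{1}(b\ge m)$. An admissible policy $\pi\in\Pi$ is a sequence of measurable functions $\pi_t$ with $b_t=\pi_t((v_s,m_s)_{s=1}^{t-1},v_t,U)$, where $U$ is the learner's internal random variable. The expected dynamic regret is $\mathbb{E}[\mathrm{DR}_T(\pi)]\coloneqq\sum_{t=1}^T\max\{v_t-m_t,0\}-\sum_{t=1}^T\mathbb{E}[r(b_t;v_t,m_t)]$. $\mathcal{V}\coloneqq\{(v_t,m_t)_{t=1}^T\in[0,1]^{2T}:\sum_{t=2}^T|m_t-m_{t-1}|\le V_T\}$. *)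

theory Defs
  imports "HOL-Probability.Probability"
begin

definition fpa_reward :: "real \<Rightarrow> real \<Rightarrow> real \<Rightarrow> real" where
  "fpa_reward b v m = (if m \<le> b then v - b else 0)"

text \<open>A policy: pi t hist v u is the bid at round t given the history
  hist = [(v_1,m_1),...,(v_{t-1},m_{t-1})], the current value v and the
  realisation u of the learner's internal random variable U, distributed
  according to the probability measure M.\<close>
type_synonym 'u policy = "nat \<Rightarrow> (real \<times> real) list \<Rightarrow> real \<Rightarrow> 'u \<Rightarrow> real"

definition admissible_policy :: "'u measure \<Rightarrow> 'u policy \<Rightarrow> bool" where
  "admissible_policy M \<pi> \<longleftrightarrow>
     (\<forall>t hist v. \<pi> t hist v \<in> borel_measurable M) \<and>
     (\<forall>t hist v. \<forall>u\<in>space M. \<pi> t hist v u \<in> {0..1})"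

text \<open>Bid at round t (rounds indexed 1..T).\<close>
definition bid :: "'u policy \<Rightarrow> (nat \<Rightarrow> real) \<Rightarrow> (nat \<Rightarrow> real) \<Rightarrow> nat \<Rightarrow> 'u \<Rightarrow> real" where
  "bid \<pi> v m t u = \<pi> t (map (\<lambda>s. (v s, m s)) [1..<t]) (v t) u"

definition exp_dyn_regret ::
  "'u measure \<Rightarrow> 'u policy \<Rightarrow> nat \<Rightarrow> (nat \<Rightarrow> real) \<Rightarrow> (nat \<Rightarrow> real) \<Rightarrow> real" where
  "exp_dyn_regret M \<pi> T v m =
     (\<Sum>t=1..T. max (v t - m t) 0)
     - (\<Sum>t=1..T. \<integral>u. fpa_reward (bid \<pi> v m t u) (v t) (m t) \<partial>M)"

definition adv_class :: "nat \<Rightarrow> real \<Rightarrow> ((nat \<Rightarrow> real) \<times> (nat \<Rightarrow> real)) set" where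
  "adv_class T V = {(v, m). (\<forall>t\<in>{1..T}. v t \<in> {0..1} \<and> m t \<in> {0..1}) \<and>
                            (\<Sum>t=2..T. \<bar>m t - m (t - 1)\<bar>) \<le> V}"

end

theory Submission
  imports Defs
begin

lemma bid_meas:
  assumes "admissible_policy M \<pi>"
  shows "\<pi> t h a \<in> borel_measurable M"
  using assms unfolding admissible_policy_def by blast

lemma bid_range:
  assumes "admissible_policy M \<pi>" "u \<in> space M"
  shows "0 \<le> \<pi> t h a u" "\<pi> t h a u \<le> 1"
  using assms unfolding admissible_policy_def by auto

lemma reward_integrable:
  assumes "prob_space M" "admissible_policy M \<pi>"
  shows "integrable M (\<lambda>u. fpa_reward (\<pi> t h a u) a c)"
proof -
  interpret prob_space M by fact
  have m: "\<pi> t h a \<in> borel_measurable M" using bid_meas[OF assms(2)] .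
  show ?thesis
  proof (rule integrable_const_bound[where B="\<bar>a\<bar> + 1"])
    show "AE x in M. norm (fpa_reward (\<pi> t h a x) a c) \<le> \<bar>a\<bar> + 1"
    proof (rule AE_I2)
      fix x assume "x \<in> space M"
      from bid_range[OF assms(2) this, of t h a]
      show "norm (fpa_reward (\<pi> t h a x) a c) \<le> \<bar>a\<bar> + 1"
        by (auto simp: fpa_reward_def)
    qed
    show "(\<lambda>u. fpa_reward (\<pi> t h a u) a c) \<in> borel_measurable M"
      unfolding fpa_reward_def using m by measurable
  qed
qed

lemma ind_integrable:
  assumes "prob_space M" "admissible_policy M \<pi>"
  shows "integrable M (\<lambda>u. if y \<le> \<pi> t h a u then 1 else (0::real))"
proof -
  interpret prob_space M by fact
  have m: "\<pi> t h a \<in> borel_measurable M" using bid_meas[OF assms(2)] .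
  show ?thesis
  proof (rule integrable_const_bound[where B="1"])
    show "AE x in M. norm (if y \<le> \<pi> t h a x then 1 else (0::real)) \<le> 1"
      by auto
    show "(\<lambda>u. if y \<le> \<pi> t h a u then 1 else (0::real)) \<in> borel_measurable M"
      using m by measurable
  qed
qed

lemma reward_ge:
  assumes "prob_space M" "admissible_policy M \<pi>" "0 \<le> a"
  shows "-1 \<le> (\<integral>u. fpa_reward (\<pi> t h a u) a c \<partial>M)"
proof -
  interpret prob_space M by fact
  have "(\<integral>u. -1 \<partial>M) \<le> (\<integral>u. fpa_reward (\<pi> t h a u) a c \<partial>M)"
    apply (rule integral_mono[OF integrable_const reward_integrable[OF assms(1,2)]])
  proof -
    fix x assume "x \<in> space M"
    from bid_range[OF assms(2) this, of t h a] assms(3)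
    show "-1 \<le> fpa_reward (\<pi> t h a x) a c" by (auto simp: fpa_reward_def)
  qed
  then show ?thesis by (simp add: prob_space)
qed


definition qv :: "'u measure \<Rightarrow> 'u policy \<Rightarrow> real \<Rightarrow> real list \<Rightarrow> real" where
  "qv M \<pi> d h = (\<integral>u. (if 1/4 + d \<le> \<pi> (Suc (length h)) (map (\<lambda>x. (1::real, x)) h) 1 u then 1 else 0) \<partial>M)"

definition spk :: "'u measure \<Rightarrow> 'u policy \<Rightarrow> real \<Rightarrow> real \<Rightarrow> real list \<Rightarrow> nat \<Rightarrow> bool" where
  "spk M \<pi> d V h c \<longleftrightarrow> qv M \<pi> d h < 1/2 \<and> 2 * d * (real c + 1) \<le> V"

primrec adv :: "'u measure \<Rightarrow> 'u policy \<Rightarrow> real \<Rightarrow> real \<Rightarrow> nat \<Rightarrow> real list \<times> nat" where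
  "adv M \<pi> d V 0 = ([], 0)"
| "adv M \<pi> d V (Suc n) =
     (if spk M \<pi> d V (fst (adv M \<pi> d V n)) (snd (adv M \<pi> d V n))
      then (fst (adv M \<pi> d V n) @ [1/4 + d], Suc (snd (adv M \<pi> d V n)))
      else (fst (adv M \<pi> d V n) @ [1/4], snd (adv M \<pi> d V n)))"

definition spt :: "'u measure \<Rightarrow> 'u policy \<Rightarrow> real \<Rightarrow> real \<Rightarrow> nat \<Rightarrow> bool" where
  "spt M \<pi> d V t = spk M \<pi> d V (fst (adv M \<pi> d V (t - 1))) (snd (adv M \<pi> d V (t - 1)))"

definition ind :: "'u measure \<Rightarrow> 'u policy \<Rightarrow> real \<Rightarrow> real \<Rightarrow> nat \<Rightarrow> real" where
  "ind M \<pi> d V t = (if spt M \<pi> d V t then 1 else 0)"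

definition mseq :: "'u measure \<Rightarrow> 'u policy \<Rightarrow> real \<Rightarrow> real \<Rightarrow> nat \<Rightarrow> real" where
  "mseq M \<pi> d V t = 1/4 + d * ind M \<pi> d V t"

lemma adv_len: "length (fst (adv M \<pi> d V n)) = n"
  by (induction n) auto

lemma adv_fst: "fst (adv M \<pi> d V n) = map (mseq M \<pi> d V) [1..<Suc n]"
  by (induction n) (auto simp: mseq_def ind_def spt_def)

lemma adv_snd: "real (snd (adv M \<pi> d V n)) = (\<Sum>t=1..n. ind M \<pi> d V t)"
  by (induction n) (auto simp: ind_def spt_def)

lemma adv_budget: "0 \<le> V \<Longrightarrow> 2 * d * real (snd (adv M \<pi> d V n)) \<le> V"
  by (induction n) (auto simp: spk_def algebra_simps)

lemma adv_mono: "n \<le> n' \<Longrightarrow> snd (adv M \<pi> d V n) \<le> snd (adv M \<pi> d V n')"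
  by (induction n' rule: dec_induct) (auto simp: le_Suc_eq)

lemma var_bound:
  fixes f g :: "nat \<Rightarrow> real"
  assumes "\<And>t. 2 \<le> t \<Longrightarrow> \<bar>f t - f (t - 1)\<bar> \<le> d * (g t + g (t - 1))"
    and "\<And>t. 0 \<le> g t" and "0 \<le> d" and "1 \<le> n"
  shows "(\<Sum>t=2..n. \<bar>f t - f (t - 1)\<bar>) \<le> 2 * d * (\<Sum>t=1..n. g t) - d * g n"
  using assms(4)
proof (induction n rule: dec_induct)
  case base
  then show ?case using assms(2,3) by simp
next
  case (step n)
  have e1: "(\<Sum>t=2..Suc n. \<bar>f t - f (t - 1)\<bar>) = (\<Sum>t=2..n. \<bar>f t - f (t - 1)\<bar>) + \<bar>f (Suc n) - f n\<bar>"
    using step(1) by (simp add: sum.cl_ivl_Suc)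
  have e2: "(\<Sum>t=1..Suc n. g t) = (\<Sum>t=1..n. g t) + g (Suc n)"
    by simp
  have "\<bar>f (Suc n) - f n\<bar> \<le> d * (g (Suc n) + g n)"
    using assms(1)[of "Suc n"] step(1) by simp
  then show ?case using e1 e2 step(3) by (simp add: algebra_simps)
qed


lemma round_bound:
  assumes P: "prob_space M" and A: "admissible_policy M \<pi>" and t: "1 \<le> t"
    and d0: "0 \<le> d" and d1: "d \<le> 1/4"
  shows "(if spt M \<pi> d V t then 1/2 - qv M \<pi> d (fst (adv M \<pi> d V (t - 1))) / 2
          else d * qv M \<pi> d (fst (adv M \<pi> d V (t - 1))))
        \<le> (1 - mseq M \<pi> d V t) - (\<integral>u. fpa_reward (bid \<pi> (\<lambda>_. 1) (mseq M \<pi> d V) t u) 1 (mseq M \<pi> d V t) \<partial>M)"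
proof -
  interpret prob_space M by fact
  define m where "m = mseq M \<pi> d V"
  define h where "h = fst (adv M \<pi> d V (t - 1))"
  define H where "H = map (\<lambda>x. (1::real, x)) h"
  define I where "I = (\<lambda>u. if 1/4 + d \<le> \<pi> t H 1 u then 1 else (0::real))"
  have hl: "Suc (length h) = t" using t by (simp add: h_def adv_len)
  have q: "qv M \<pi> d h = (\<integral>u. I u \<partial>M)"
    unfolding qv_def I_def H_def hl ..
  have bideq: "bid \<pi> (\<lambda>_. 1) m t u = \<pi> t H 1 u" for u
  proof -
    have "h = map m [1..<t]" using t by (simp add: h_def adv_fst m_def)
    then show ?thesis by (simp add: bid_def H_def comp_def)
  qed
  have Iint: "integrable M I" unfolding I_def by (rule ind_integrable[OF P A])
  have Rint: "integrable M (\<lambda>u. fpa_reward (\<pi> t H 1 u) 1 (m t))"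
    by (rule reward_integrable[OF P A])
  let ?R = "\<lambda>u. fpa_reward (\<pi> t H 1 u) 1 (m t)"
  show ?thesis
  proof (cases "spt M \<pi> d V t")
    case True
    then have mt: "m t = 1/4 + d" by (simp add: m_def mseq_def ind_def)
    have "(\<integral>u. ?R u \<partial>M) \<le> (\<integral>u. ((1 - m t) - 1/2) + 1/2 * I u \<partial>M)"
    proof (rule integral_mono[OF Rint])
      show "integrable M (\<lambda>u. ((1 - m t) - 1/2) + 1/2 * I u)" using Iint by simp
      fix u assume "u \<in> space M"
      show "?R u \<le> ((1 - m t) - 1/2) + 1/2 * I u"
        using mt d1 by (auto simp: fpa_reward_def I_def)
    qed
    also have "\<dots> = ((1 - m t) - 1/2) + 1/2 * (\<integral>u. I u \<partial>M)"
      using Iint by (simp add: prob_space)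
    finally show ?thesis using True q by (simp add: bideq[unfolded m_def] m_def h_def)
  next
    case False
    then have mt: "m t = 1/4" by (simp add: m_def mseq_def ind_def)
    have "(\<integral>u. ?R u \<partial>M) \<le> (\<integral>u. (1 - m t) - d * I u \<partial>M)"
    proof (rule integral_mono[OF Rint])
      show "integrable M (\<lambda>u. (1 - m t) - d * I u)" using Iint by simp
      fix u assume "u \<in> space M"
      show "?R u \<le> (1 - m t) - d * I u"
        using mt d1 d0 by (auto simp: fpa_reward_def I_def)
    qed
    also have "\<dots> = (1 - m t) - d * (\<integral>u. I u \<partial>M)"
      using Iint by (simp add: prob_space)
    finally show ?thesis using False q by (simp add: bideq[unfolded m_def] m_def h_def)
  qed
qed


lemma qv_nonneg: "0 \<le> qv M \<pi> d h"
  unfolding qv_def by (rule integral_nonneg_AE) auto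

theorem theorem4:
  fixes T :: nat and V :: real and M :: "'u measure" and \<pi> :: "'u policy"
  assumes "T \<ge> 1"
    and "36 / real T \<le> V" and "V \<le> real T / 4"
    and "prob_space M"
    and "admissible_policy M \<pi>"
  shows "sqrt (real T * V) / 16 \<le>
           (SUP vm\<in>adv_class T V. exp_dyn_regret M \<pi> T (fst vm) (snd vm))"
proof -
  note P = assms(4) and A = assms(5)
  interpret prob_space M by fact
  have T1: "1 \<le> real T" using assms(1) by simp
  have TV: "36 \<le> real T * V" using assms(2) T1 by (simp add: field_simps)
  have TV2: "real T * V \<le> (real T / 2)^2" using assms(3) T1 by (simp add: power2_eq_square field_simps)
  have V0: "0 \<le> V" using TV T1 by (smt (verit) mult_nonneg_nonpos)
  define s where "s = sqrt (real T * V)"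
  have s6: "6 \<le> s" unfolding s_def using real_sqrt_le_mono[OF TV] by simp
  have sT: "s \<le> real T / 2" unfolding s_def using real_sqrt_le_mono[OF TV2] T1 by simp
  have ss: "s * s = real T * V" unfolding s_def using TV by simp
  define d where "d = s / (4 * real T)"
  have d0: "0 \<le> d" using s6 T1 by (simp add: d_def)
  have d8: "d \<le> 1/8" using sT T1 by (simp add: d_def field_simps)
  define m where "m = mseq M \<pi> d V"
  define v where "v = (\<lambda>_::nat. 1::real)"
  define \<iota> where "\<iota> = ind M \<pi> d V"
  define C where "C = snd (adv M \<pi> d V T)"
  have \<iota>01: "\<iota> t = 0 \<or> \<iota> t = 1" for t by (simp add: \<iota>_def ind_def)
  have mt: "m t = 1/4 + d * \<iota> t" for t by (simp add: m_def mseq_def \<iota>_def)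
  have C_sum: "real C = (\<Sum>t=1..T. \<iota> t)" unfolding C_def \<iota>_def by (rule adv_snd)
  have mem: "(v, m) \<in> adv_class T V"
  proof -
    have r: "v t \<in> {0..1} \<and> m t \<in> {0..1}" for t
      using \<iota>01[of t] d0 d8 by (auto simp: v_def mt)
    have "(\<Sum>t=2..T. \<bar>m t - m (t - 1)\<bar>) \<le> 2 * d * (\<Sum>t=1..T. \<iota> t) - d * \<iota> T"
    proof (rule var_bound[OF _ _ d0 assms(1)])
      fix t :: nat
      show "\<bar>m t - m (t - 1)\<bar> \<le> d * (\<iota> t + \<iota> (t - 1))"
        using \<iota>01[of t] \<iota>01[of "t-1"] d0 by (auto simp: mt)
      show "0 \<le> \<iota> t" using \<iota>01[of t] by auto
    qed
    also have "\<dots> \<le> 2 * d * real C" using C_sum \<iota>01[of T] d0 by auto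
    also have "\<dots> \<le> V" unfolding C_def by (rule adv_budget[OF V0])
    finally show ?thesis using r by (auto simp: adv_class_def)
  qed
  have bdd: "bdd_above ((\<lambda>vm. exp_dyn_regret M \<pi> T (fst vm) (snd vm)) ` adv_class T V)"
  proof (rule bdd_aboveI2)
    fix vm assume "vm \<in> adv_class T V"
    then obtain v' m' where vm: "vm = (v', m')" and
      r: "\<And>t. t \<in> {1..T} \<Longrightarrow> v' t \<in> {0..1} \<and> m' t \<in> {0..1}"
      by (auto simp: adv_class_def)
    have "(\<Sum>t=1..T. max (v' t - m' t) 0) \<le> (\<Sum>t=1..T. 1)"
    proof (rule sum_mono)
      fix t assume "t \<in> {1..T}"
      from r[OF this] show "max (v' t - m' t) 0 \<le> 1" by auto
    qed
    moreover have "(\<Sum>t=1..T. (-1::real)) \<le> (\<Sum>t=1..T. \<integral>u. fpa_reward (bid \<pi> v' m' t u) (v' t) (m' t) \<partial>M)"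
    proof (rule sum_mono)
      fix t assume "t \<in> {1..T}"
      then show "-1 \<le> (\<integral>u. fpa_reward (bid \<pi> v' m' t u) (v' t) (m' t) \<partial>M)"
        unfolding bid_def using reward_ge[OF P A] r by auto
    qed
    ultimately show "exp_dyn_regret M \<pi> T (fst vm) (snd vm) \<le> 2 * real T"
      by (simp add: vm exp_dyn_regret_def)
  qed
  define q where "q t = qv M \<pi> d (fst (adv M \<pi> d V (t - 1)))" for t
  define g where "g t = (if spt M \<pi> d V t then 1/2 - q t / 2 else d * q t)" for t
  have reg: "exp_dyn_regret M \<pi> T v m =
      (\<Sum>t=1..T. (1 - m t) - (\<integral>u. fpa_reward (bid \<pi> v m t u) (v t) (m t) \<partial>M))"
  proof -
    have "max (v t - m t) 0 = 1 - m t" for t using \<iota>01[of t] d0 d8 by (auto simp: v_def mt)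
    then show ?thesis by (simp add: exp_dyn_regret_def sum_subtractf)
  qed
  have gle: "(\<Sum>t=1..T. g t) \<le> exp_dyn_regret M \<pi> T v m"
    unfolding reg
  proof (rule sum_mono)
    fix t assume "t \<in> {1..T}"
    then show "g t \<le> (1 - m t) - (\<integral>u. fpa_reward (bid \<pi> v m t u) (v t) (m t) \<partial>M)"
      using round_bound[OF P A _ d0, of t V] d8 by (auto simp: g_def q_def m_def v_def)
  qed
  have spq: "spt M \<pi> d V t \<Longrightarrow> q t < 1/2" for t
    by (simp add: spt_def spk_def q_def)
  have main: "s / 16 \<le> (\<Sum>t=1..T. g t)"
  proof (cases "2 * d * (real C + 1) \<le> V")
    case True
    have "(\<Sum>t=1..T. d / 2) \<le> (\<Sum>t=1..T. g t)"
    proof (rule sum_mono)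
      fix t assume t: "t \<in> {1..T}"
      show "d / 2 \<le> g t"
      proof (cases "spt M \<pi> d V t")
        case True
        then show ?thesis using spq[OF True] d8 by (simp add: g_def)
      next
        case False
        have "snd (adv M \<pi> d V (t - 1)) \<le> C" unfolding C_def
          by (rule adv_mono) (use t in auto)
        then have "2 * d * (real (snd (adv M \<pi> d V (t - 1))) + 1) \<le> V"
          using True d0 by (smt (verit) mult_left_mono of_nat_le_iff)
        then have "1/2 \<le> q t" using False by (auto simp: spt_def spk_def q_def)
        then show ?thesis using False d0 by (simp add: g_def mult_left_mono[of "1/2" "q t" d, simplified])
      qed
    qed
    moreover have "(\<Sum>t=1..T. d / 2) = s / 8" using T1 by (simp add: d_def)
    ultimately show ?thesis using s6 by linarith
  next
    case False
    have "(\<Sum>t=1..T. \<iota> t / 4) \<le> (\<Sum>t=1..T. g t)"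
    proof (rule sum_mono)
      fix t assume t: "t \<in> {1..T}"
      show "\<iota> t / 4 \<le> g t"
      proof (cases "spt M \<pi> d V t")
        case True
        then show ?thesis using spq[OF True] by (simp add: g_def \<iota>_def ind_def)
      next
        case False
        then show ?thesis using d0 qv_nonneg[of M \<pi> d] by (simp add: g_def \<iota>_def ind_def q_def)
      qed
    qed
    moreover have "(\<Sum>t=1..T. \<iota> t / 4) = real C / 4" using C_sum by (simp add: sum_divide_distrib)
    moreover have "2 * s < real C + 1"
    proof -
      have "V < 2 * d * (real C + 1)" using False by simp
      then have "real T * V < s * (real C + 1) / 2" using T1 by (simp add: d_def field_simps)
      then have "s * (2 * s) < s * (real C + 1)" using ss by simp
      then show ?thesis using s6 by simp
    qed
    ultimately show ?thesis using s6 by simp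
  qed
  show ?thesis
    by (rule cSUP_upper2[OF bdd mem]) (use main gle s_def in simp)
qed

end
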